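(* For $\mathbf{x}=(x_1,\dots,x_N)^{\mathrm T}\in\mathbb{R}^N$ define $$\ell_{\mathrm{osb}}(\mathbf{x})=\Big(\sum_{n=1}^N x_n^2\Big)\Big(\sum_{n=1}^N x_n^4\Big)-\Big(\sum_{n=1}^N x_n^3\Big)^2.$$ Then $\ell_{\mathrm{osb}}(\mathbf{x})\ge0$ for all $\mathbf{x}$, and $\ell_{\mathrm{osb}}(\mathbf{x})=0$ if and only if $\mathbf{x}\in\{0,\alpha\}^N$ for some $\alpha\in\mathbb{R}$. Furthermore, $\ell_{\mathrm{osb}}$ has no spurious stationary points: $\nabla\ell_{\mathrm{osb}}(\mathbf{x})=\mathbf{0}$ holds only if $\mathbf{x}\in\{0,\alpha\}^N$ for some $\alpha\in\mathbb{R}$.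
   Context: A spurious stationary point of a differentiable function $\ell$ whose zero set is $\mathcal{X}$ is a point $\mathbf{x}\notin\mathcal{X}$ with $\nabla\ell(\mathbf{x})=\mathbf{0}$. *)

theory Defs
  imports "HOL-Analysis.Analysis"
begin

text \<open>x in R^N is modelled as x :: real ^ 'n, with N = CARD('n).\<close>

definition l_osb :: "real ^ 'n \<Rightarrow> real" where
  "l_osb x = (\<Sum>n\<in>UNIV. (x $ n) ^ 2) * (\<Sum>n\<in>UNIV. (x $ n) ^ 4)
             - (\<Sum>n\<in>UNIV. (x $ n) ^ 3) ^ 2"

definition in_zero_alpha_set :: "real ^ 'n \<Rightarrow> bool" where
  "in_zero_alpha_set x \<longleftrightarrow> (\<exists>\<alpha>::real. \<forall>n. x $ n \<in> {0, \<alpha>})"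

end

theory Submission
  imports Defs
begin

lemma lagrange:
  fixes x :: "real ^ 'n"
  shows "2 * l_osb x = (\<Sum>i\<in>UNIV. \<Sum>j\<in>UNIV. (x$i * x$j * (x$j - x$i))^2)"
proof -
  have "(\<Sum>i\<in>UNIV. \<Sum>j\<in>UNIV. (x$i * x$j * (x$j - x$i))^2)
     = (\<Sum>i\<in>UNIV. \<Sum>j\<in>UNIV. (x$i)^2 * (x$j)^4 + (x$i)^4 * (x$j)^2 - 2 * ((x$i)^3 * (x$j)^3))"
    by (intro sum.cong refl) (simp add: power2_eq_square power4_eq_xxxx power3_eq_cube algebra_simps)
  also have "\<dots> = (\<Sum>i\<in>UNIV. \<Sum>j\<in>UNIV. (x$i)^2 * (x$j)^4) + (\<Sum>i\<in>UNIV. \<Sum>j\<in>UNIV. (x$i)^4 * (x$j)^2)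
      - 2 * (\<Sum>i\<in>UNIV. \<Sum>j\<in>UNIV. (x$i)^3 * (x$j)^3)"
    by (simp add: sum.distrib sum_subtractf sum_distrib_left)
  also have "\<dots> = 2 * l_osb x"
    unfolding l_osb_def sum_product[symmetric] by (simp add: power2_eq_square algebra_simps)
  finally show ?thesis by simp
qed

lemma zero_iff:
  fixes x :: "real ^ 'n"
  shows "l_osb x = 0 \<longleftrightarrow> in_zero_alpha_set x"
proof -
  have "l_osb x = 0 \<longleftrightarrow> (\<Sum>i\<in>UNIV. \<Sum>j\<in>UNIV. (x$i * x$j * (x$j - x$i))^2) = 0"
    using lagrange[of x] by linarith
  also have "\<dots> \<longleftrightarrow> (\<forall>i j. (x$i * x$j * (x$j - x$i))^2 = 0)"
    by (simp add: sum_nonneg_eq_0_iff sum_nonneg)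
  also have "\<dots> \<longleftrightarrow> (\<forall>i j. x$i = 0 \<or> x$j = 0 \<or> x$j = x$i)"
    by auto
  also have "\<dots> \<longleftrightarrow> in_zero_alpha_set x"
  proof
    assume H: "\<forall>i j. x$i = 0 \<or> x$j = 0 \<or> x$j = x$i"
    show "in_zero_alpha_set x"
    proof (cases "\<exists>k. x$k \<noteq> 0")
      case True
      then obtain k where "x$k \<noteq> 0" by blast
      then show ?thesis unfolding in_zero_alpha_set_def using H
        by (metis insert_iff)
    next
      case False
      then show ?thesis unfolding in_zero_alpha_set_def by auto
    qed
  next
    assume "in_zero_alpha_set x"
    then obtain a where "\<forall>n. x$n \<in> {0, a}" unfolding in_zero_alpha_set_def by blast
    then show "\<forall>i j. x$i = 0 \<or> x$j = 0 \<or> x$j = x$i" by auto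
  qed
  finally show ?thesis .
qed

lemma nonneg:
  fixes x :: "real ^ 'n"
  shows "l_osb x \<ge> 0"
proof -
  have "0 \<le> (\<Sum>i\<in>UNIV. \<Sum>j\<in>UNIV. (x$i * x$j * (x$j - x$i))^2)"
    by (intro sum_nonneg) simp
  then show ?thesis using lagrange[of x] by linarith
qed

lemma homog:
  fixes x :: "real ^ 'n"
  shows "l_osb (t *\<^sub>R x) = t^6 * l_osb x"
proof -
  have e: "\<And>k::nat. (\<Sum>n\<in>UNIV. ((t *\<^sub>R x) $ n) ^ k) = t^k * (\<Sum>n\<in>UNIV. (x $ n) ^ k)"
    by (simp add: power_mult_distrib sum_distrib_left)
  show ?thesis unfolding l_osb_def e by (simp add: algebra_simps power_mult_distrib)
qed

lemma stationary:
  fixes x :: "real ^ 'n"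
  assumes "(l_osb has_derivative (\<lambda>h. 0)) (at x)"
  shows "l_osb x = 0"
proof -
  have lin: "((\<lambda>t::real. t *\<^sub>R x) has_derivative (\<lambda>h. h *\<^sub>R x)) (at 1)"
    by (auto intro!: derivative_eq_intros)
  have d1: "((\<lambda>t::real. l_osb (t *\<^sub>R x)) has_derivative (\<lambda>h. 0)) (at 1)"
    using has_derivative_compose[OF lin, of l_osb "\<lambda>h. 0"] assms by simp
  have d2: "((\<lambda>t::real. l_osb (t *\<^sub>R x)) has_derivative (\<lambda>h. h * (6 * l_osb x))) (at 1)"
    unfolding homog
    by (auto intro!: derivative_eq_intros)
  have "(\<lambda>h::real. 0::real) = (\<lambda>h. h * (6 * l_osb x))"
    using has_derivative_unique[OF d1 d2] .
  then have "(0::real) = 1 * (6 * l_osb x)" by metis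
  then show ?thesis by simp
qed

theorem mainTheorem4:
  shows "(\<forall>x::real ^ 'n. l_osb x \<ge> 0)
       \<and> (\<forall>x::real ^ 'n. l_osb x = 0 \<longleftrightarrow> in_zero_alpha_set x)
       \<and> (\<forall>x::real ^ 'n. (l_osb has_derivative (\<lambda>h. 0)) (at x) \<longrightarrow> in_zero_alpha_set x)"
  using nonneg zero_iff stationary by blast

end
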